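(* Let $k,\ell\in\mathbb{R}$ and fix $0<T\le1$. There are constants $N_0,c>0$ (independent of $N$) such that for all dyadic $N\ge N_0$ there exists $u_N\in H^k(\mathbb{R}^2)$ with $$\sup_{|t|\le T}\Big\|\int_0^te^{-i(t-t')\langle\nabla\rangle}\frac{\Delta}{\langle\nabla\rangle}\Big(e^{it'\Delta}u_N\,\overline{e^{it'\Delta}u_N}\Big)dt'\Big\|_{H^\ell}\ge c\,N^{\ell-2k+\frac12}\|u_N\|_{H^k}^2.$$
   Context: $\langle\nabla\rangle=(1-\Delta)^{1/2}$; $e^{it\Delta}$ and $e^{-it\langle\nabla\rangle}$ are the Fourier multipliers $e^{-it|\xi|^2}$ and $e^{-it\langle\xi\rangle}$ on $\mathbb{R}^2$, $\langle\xi\rangle=(1+|\xi|^2)^{1/2}$. *)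

theory Defs
  imports "HOL-Analysis.Analysis"
begin

(* Functions on R^2 are represented on the Fourier side: a function u is given by
   its Fourier transform  uhat xi = \<integral> u(x) e^{-i x.xi} dx,  xi :: real^2. *)

definition japbr :: "real^2 \<Rightarrow> real" where
  "japbr \<xi> = sqrt (1 + (norm \<xi>)\<^sup>2)"

definition in_H :: "real \<Rightarrow> (real^2 \<Rightarrow> complex) \<Rightarrow> bool" where
  "in_H \<sigma> uhat \<longleftrightarrow> uhat \<in> borel_measurable lborel \<and>
     integrable lborel (\<lambda>\<xi>. (japbr \<xi> powr (2*\<sigma>)) * (cmod (uhat \<xi>) ^ 2))"

definition sob_norm :: "real \<Rightarrow> (real^2 \<Rightarrow> complex) \<Rightarrow> real" where
  "sob_norm \<sigma> uhat = sqrt (LINT \<xi>|lborel. (japbr \<xi> powr (2*\<sigma>)) * (cmod (uhat \<xi>) ^ 2))"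

(* Fourier transform of  e^{it Delta}u * conj(e^{it Delta}u)  at xi:
   (2 pi)^{-2} \<integral> e^{-it|eta|^2} uhat(eta) conj(e^{-it|eta-xi|^2} uhat(eta-xi)) d eta *)
definition schr_prod_hat :: "(real^2 \<Rightarrow> complex) \<Rightarrow> real \<Rightarrow> real^2 \<Rightarrow> complex" where
  "schr_prod_hat uhat t \<xi> = complex_of_real (1 / (2*pi)\<^sup>2) *
     (LINT \<eta>|lborel. cis (- t * (norm \<eta>)\<^sup>2) * uhat \<eta> *
        cnj (cis (- t * (norm (\<eta> - \<xi>))\<^sup>2) * uhat (\<eta> - \<xi>)))"

(* Fourier transform of the Duhamel term
   \<integral>_0^t e^{-i(t-t')<nabla>} (Delta/<nabla>) (e^{it'Delta}u conj(e^{it'Delta}u)) dt' *)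
definition duhamel_hat :: "(real^2 \<Rightarrow> complex) \<Rightarrow> real \<Rightarrow> real^2 \<Rightarrow> complex" where
  "duhamel_hat uhat t \<xi> = interval_lebesgue_integral lborel (ereal 0) (ereal t)
     (\<lambda>s. cis (- (t - s) * japbr \<xi>) * complex_of_real (- (norm \<xi>)\<^sup>2 / japbr \<xi>)
          * schr_prod_hat uhat s \<xi>)"

end

theory Submission
  imports Defs
begin

lemma cis_meas[measurable]: "cis \<in> borel_measurable borel"
  by (intro borel_measurable_continuous_onI continuous_intros)
lemma cnj_meas[measurable]: "cnj \<in> borel_measurable borel"
  by (intro borel_measurable_continuous_onI continuous_intros)

lemma norm2: "(norm (x::real^2))\<^sup>2 = (x$1)\<^sup>2 + (x$2)\<^sup>2"
  unfolding power2_norm_eq_inner inner_vec_def sum_2 by (simp add: power2_eq_square)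

lemma japbr_eq: "japbr x = sqrt (1 + (x$1)\<^sup>2 + (x$2)\<^sup>2)"
  by (simp add: japbr_def norm2)

lemma japbr_ge1: "1 \<le> japbr x"
  by (simp add: japbr_def)

definition bx :: "real \<Rightarrow> real \<Rightarrow> real \<Rightarrow> real \<Rightarrow> (real^2) set" where
  "bx p q r s = cbox (vector [p,r]) (vector [q,s])"

lemma mem_bx: "x \<in> bx p q r s \<longleftrightarrow> p \<le> x$1 \<and> x$1 \<le> q \<and> r \<le> x$2 \<and> x$2 \<le> s"
  by (auto simp add: bx_def mem_box_cart forall_2)

lemma bx_meas[measurable]: "bx p q r s \<in> sets lborel"
  by (simp add: bx_def)

lemma bx_borel[measurable]: "bx p q r s \<in> sets borel"
  by (simp add: bx_def)

lemma bx_fin: "emeasure lborel (bx p q r s) < \<infinity>"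
  unfolding bx_def by (rule emeasure_lborel_cbox_finite)

lemma measure_bx: "p \<le> q \<Longrightarrow> r \<le> s \<Longrightarrow> measure lborel (bx p q r s) = (q-p)*(s-r)"
proof -
  assume a: "p \<le> q" "r \<le> s"
  have "vector [p,r] \<in> bx p q r s" using a by (simp add: mem_bx)
  hence "cbox (vector [p,r]) (vector [q,s] :: real^2) \<noteq> {}" unfolding bx_def by auto
  thus ?thesis unfolding bx_def by (simp add: content_cbox_cart UNIV_2)
qed

lemma powr_sandwich:
  fixes N c x p :: real
  assumes "0 < N" "1 \<le> c" "N/c \<le> x" "x \<le> c*N"
  shows "x powr p \<le> c powr \<bar>p\<bar> * N powr p" "N powr p / c powr \<bar>p\<bar> \<le> x powr p"
proof -
  define r where "r = x / N"
  have c0: "0 < c" using assms by simp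
  have r1: "1/c \<le> r" unfolding r_def using assms c0 by (simp add: field_simps)
  have r2: "r \<le> c" unfolding r_def using assms c0 by (simp add: field_simps)
  have rpos: "0 < r" using r1 c0 by (smt (verit) divide_pos_pos)
  have x: "x = N * r" unfolding r_def using assms by simp
  have xp: "x powr p = N powr p * r powr p" unfolding x using assms rpos by (simp add: powr_mult)
  have up: "r powr p \<le> c powr \<bar>p\<bar>"
  proof (cases "0 \<le> p")
    case True then show ?thesis using powr_mono2[OF True _ r2] rpos by simp
  next
    case False
    have "r powr p = (1/r) powr (-p)" using rpos by (simp add: powr_divide powr_minus_divide)
    also have "\<dots> \<le> c powr (-p)"
      using False r1 c0 rpos by (intro powr_mono2) (auto simp: field_simps)
    finally show ?thesis using False by simp
  qed
  have lo: "1 / c powr \<bar>p\<bar> \<le> r powr p"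
  proof (cases "0 \<le> p")
    case True
    have "(1/c) powr p \<le> r powr p" using powr_mono2[OF True _ r1] c0 by simp
    then show ?thesis using True c0 by (simp add: powr_divide)
  next
    case False
    have "r powr p = (1/r) powr (-p)" using rpos by (simp add: powr_divide powr_minus_divide)
    moreover have "(1/c) powr (-p) \<le> (1/r) powr (-p)"
      using False r2 c0 rpos by (intro powr_mono2) (auto simp: field_simps)
    ultimately show ?thesis using False c0 by (simp add: powr_divide)
  qed
  show "x powr p \<le> c powr \<bar>p\<bar> * N powr p" unfolding xp
    using up by (simp add: mult.commute mult_left_mono)
  show "N powr p / c powr \<bar>p\<bar> \<le> x powr p" unfolding xp
    using mult_left_mono[OF lo, of "N powr p"] by simp
qed

lemma cos_half: "\<bar>\<theta>::real\<bar> \<le> 1/2 \<Longrightarrow> 1/2 \<le> cos \<theta>"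
proof -
  assume h: "\<bar>\<theta>\<bar> \<le> 1/2"
  have "cos (pi/3) \<le> cos \<bar>\<theta>\<bar>" using h pi_gt3 by (intro cos_monotone_0_pi_le) auto
  thus ?thesis by (simp add: cos_60)
qed

lemma phase_real:
  fixes N d a b x1 x2 y1 y2 :: real
  assumes N: "16 \<le> N" and d: "d = 1/(32*N)" and a: "a = N/2 + 1/2" and b: "b = 1/2 - N/2"
    and x1: "a \<le> x1" "x1 \<le> a + 2*d" and x2: "0 \<le> x2" "x2 \<le> 1/4"
    and y1: "b \<le> y1" "y1 \<le> b + 2*d" and y2: "0 \<le> y2" "y2 \<le> 1/4"
  shows "\<bar>sqrt (1 + (x1-y1)\<^sup>2 + (x2-y2)\<^sup>2) - (x1\<^sup>2 + x2\<^sup>2) + (y1\<^sup>2 + y2\<^sup>2)\<bar> \<le> 1/2"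
proof -
  define D where "D = x1 - y1"
  define u where "u = x1 - a"
  define v where "v = y1 - b"
  define e where "e = (x2-y2)\<^sup>2"
  define sq where "sq = sqrt (1 + D\<^sup>2 + e)"
  have dpos: "0 < d" using d N by simp
  have dsmall: "d \<le> 1/512" unfolding d using N by (simp add: divide_simps)
  have Nd: "N * d = 1/32" using d N by simp
  have u: "0 \<le> u" "u \<le> 2*d" using x1 u_def by auto
  have v: "0 \<le> v" "v \<le> 2*d" using y1 v_def by auto
  have Dexp: "D = N + u - v" unfolding D_def u_def v_def a b by (simp add: field_simps)
  have Dlo: "15 \<le> D" using Dexp u v dsmall N by linarith
  have Dhi: "D \<le> N + 2*d" using Dexp u v by linarith
  have e: "0 \<le> e" "e \<le> 1/16"
  proof -
    show "0 \<le> e" unfolding e_def by simp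
    have "\<bar>x2 - y2\<bar> \<le> 1/4" using x2 y2 by linarith
    hence "\<bar>x2 - y2\<bar>\<^sup>2 \<le> (1/4)\<^sup>2" by (intro power_mono) auto
    thus "e \<le> 1/16" unfolding e_def by (simp add: power2_eq_square)
  qed
  have sq_lo: "D \<le> sq"
  proof -
    have "sqrt (D\<^sup>2) \<le> sq" unfolding sq_def using e by (intro real_sqrt_le_mono) simp
    thus ?thesis using Dlo by simp
  qed
  have sq_hi: "sq \<le> D + 1/8"
  proof -
    have "1 + D\<^sup>2 + e \<le> (D + 1/8)\<^sup>2" using e Dlo by (simp add: power2_eq_square algebra_simps)
    hence "sq \<le> sqrt ((D+1/8)\<^sup>2)" unfolding sq_def by (intro real_sqrt_le_mono)
    thus ?thesis using Dlo by simp
  qed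
  have uv1: "1 + u + v = x1 + y1" unfolding u_def v_def a b by (simp add: field_simps)
  have sum1: "x1\<^sup>2 - y1\<^sup>2 = D * (1 + u + v)"
    unfolding uv1 D_def by (simp add: power2_eq_square algebra_simps)
  have Duv: "0 \<le> D * (u + v)" using Dlo u v by simp
  have Duv2: "D * (u + v) \<le> (N + 2*d) * (4*d)"
    using Dlo Dhi u v by (intro mult_mono) auto
  have "(N + 2*d) * (4*d) = 4 * (N*d) + 8*d*d" by (simp add: algebra_simps)
  also have "\<dots> \<le> 1/8 + 8*(1/512)*(1/512)"
  proof -
    have "d*d \<le> (1/512)*(1/512)" using dsmall dpos by (intro mult_mono) auto
    thus ?thesis using Nd by simp
  qed
  finally have Duv3: "D * (u + v) \<le> 1/8 + 1/32768" using Duv2 by simp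
  have yx: "\<bar>y2\<^sup>2 - x2\<^sup>2\<bar> \<le> 1/16"
  proof -
    have "y2*y2 \<le> (1/4)*(1/4)" "x2*x2 \<le> (1/4)*(1/4)" using x2 y2 by (intro mult_mono; simp)+
    hence "y2\<^sup>2 \<le> 1/16" "x2\<^sup>2 \<le> 1/16" by (simp_all add: power2_eq_square)
    moreover have "0 \<le> y2\<^sup>2" "0 \<le> x2\<^sup>2" by auto
    ultimately show ?thesis by linarith
  qed
  have psi: "sq - (x1\<^sup>2 + x2\<^sup>2) + (y1\<^sup>2 + y2\<^sup>2) = (sq - D) - D*(u+v) + (y2\<^sup>2 - x2\<^sup>2)"
    using sum1 by (simp add: algebra_simps)
  have "\<bar>(sq - D) - D*(u+v) + (y2\<^sup>2 - x2\<^sup>2)\<bar> \<le> 1/2"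
    using sq_lo sq_hi Duv Duv3 yx by linarith
  hence "\<bar>sq - (x1\<^sup>2 + x2\<^sup>2) + (y1\<^sup>2 + y2\<^sup>2)\<bar> \<le> 1/2" by (subst psi)
  thus ?thesis unfolding sq_def e_def D_def .
qed

definition dd :: "real \<Rightarrow> real" where "dd N = 1/(32*N)"
definition aa :: "real \<Rightarrow> real" where "aa N = N/2 + 1/2"
definition bb :: "real \<Rightarrow> real" where "bb N = 1/2 - N/2"
definition B1 :: "real \<Rightarrow> (real^2) set" where "B1 N = bx (aa N) (aa N + 2*dd N) 0 (1/4)"
definition B2 :: "real \<Rightarrow> (real^2) set" where "B2 N = bx (bb N) (bb N + 2*dd N) 0 (1/4)"
definition SS :: "real \<Rightarrow> (real^2) set" where "SS N = B1 N \<union> B2 N"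
definition QQ :: "real \<Rightarrow> (real^2) set" where "QQ N = bx (aa N + dd N) (aa N + 2*dd N) (1/8) (1/4)"
definition XI :: "real \<Rightarrow> (real^2) set" where "XI N = bx N (N + dd N) 0 (1/8)"
definition KK :: "real \<Rightarrow> (real^2) set" where "KK N = bx (-(N+2)) (N+2) (-1) 1"
definition UU :: "real \<Rightarrow> real^2 \<Rightarrow> complex" where "UU N \<eta> = (if \<eta> \<in> SS N then 1 else 0)"

lemma SS_meas[measurable]: "SS N \<in> sets lborel"
  unfolding SS_def B1_def B2_def by (rule sets.Un; rule bx_meas)
lemma UU_meas[measurable]: "UU N \<in> borel_measurable lborel"
  unfolding UU_def by measurable

lemma dd_pos: "0 < N \<Longrightarrow> 0 < dd N" by (simp add: dd_def)
lemma dd_small: "16 \<le> N \<Longrightarrow> dd N \<le> 1/512" unfolding dd_def by (simp add: divide_simps)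

lemma G1:
  assumes N: "16 \<le> N" and xi: "\<xi> \<in> XI N" and e: "\<eta> \<in> SS N" "\<eta> - \<xi> \<in> SS N"
  shows "\<eta> \<in> B1 N \<and> \<eta> - \<xi> \<in> B2 N"
  using xi e dd_small[OF N] dd_pos[of N] N
  by (auto simp: XI_def SS_def B1_def B2_def mem_bx aa_def bb_def)

lemma G2:
  assumes N: "16 \<le> N" and xi: "\<xi> \<in> XI N" and e: "\<eta> \<in> QQ N"
  shows "\<eta> \<in> B1 N \<and> \<eta> - \<xi> \<in> B2 N"
  using xi e dd_small[OF N] dd_pos[of N] N
  by (auto simp: XI_def QQ_def B1_def B2_def mem_bx aa_def bb_def)

lemma G3:
  assumes N: "16 \<le> N" and e: "\<eta> \<in> SS N" "\<eta> - \<xi> \<in> SS N"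
  shows "\<xi> \<in> KK N"
  using e dd_small[OF N] dd_pos[of N] N
  by (auto simp: KK_def SS_def B1_def B2_def mem_bx aa_def bb_def)

lemma phase:
  assumes N: "16 \<le> N" and e: "\<eta> \<in> B1 N" "\<eta> - \<xi> \<in> B2 N"
  shows "\<bar>japbr \<xi> - (norm \<eta>)\<^sup>2 + (norm (\<eta> - \<xi>))\<^sup>2\<bar> \<le> 1/2"
proof -
  have "\<bar>sqrt (1 + (\<eta>$1 - (\<eta>-\<xi>)$1)\<^sup>2 + (\<eta>$2 - (\<eta>-\<xi>)$2)\<^sup>2) - ((\<eta>$1)\<^sup>2 + (\<eta>$2)\<^sup>2)
      + (((\<eta>-\<xi>)$1)\<^sup>2 + ((\<eta>-\<xi>)$2)\<^sup>2)\<bar> \<le> 1/2"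
    using e by (intro phase_real[OF N dd_def aa_def bb_def]) (auto simp: B1_def B2_def mem_bx)
  thus ?thesis by (simp add: japbr_eq norm2)
qed

lemma japbr_bnd:
  assumes "0 \<le> A" "0 \<le> B" "A\<^sup>2 \<le> 1 + (x$1)\<^sup>2 + (x$2)\<^sup>2" "1 + (x$1)\<^sup>2 + (x$2)\<^sup>2 \<le> B\<^sup>2"
  shows "A \<le> japbr x" "japbr x \<le> B"
proof -
  show "A \<le> japbr x" unfolding japbr_eq using assms by (intro real_le_rsqrt) auto
  have "japbr x \<le> sqrt (B\<^sup>2)" unfolding japbr_eq using assms by (intro real_sqrt_le_mono) auto
  thus "japbr x \<le> B" using assms by simp
qed

lemma sq_bnd: "\<bar>a::real\<bar> \<le> b \<Longrightarrow> a\<^sup>2 \<le> b\<^sup>2"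
  by (metis abs_le_square_iff abs_of_nonneg abs_ge_zero order_trans)
lemma sq_bnd2: "0 \<le> (b::real) \<Longrightarrow> b \<le> \<bar>a\<bar> \<Longrightarrow> b\<^sup>2 \<le> a\<^sup>2"
  by (metis abs_le_square_iff abs_of_nonneg)

lemma sqN: "16 \<le> (N::real) \<Longrightarrow> 1 + (N+2)\<^sup>2 + 1 \<le> (2*N)\<^sup>2 \<and> 1 + (N+1)\<^sup>2 + 1 \<le> (2*N)\<^sup>2 \<and> 1 + N\<^sup>2 + 1 \<le> (4*N)\<^sup>2"
proof -
  assume N: "16 \<le> N"
  have h: "16*N \<le> N*N" using N by (intro mult_right_mono) auto
  have "(N+2)\<^sup>2 = N*N + 4*N + 4" "(N+1)\<^sup>2 = N*N+2*N+1" "(2*N)\<^sup>2 = 4*(N*N)" "(4*N)\<^sup>2 = 16*(N*N)" "N\<^sup>2 = N*N"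
    by (simp_all add: power2_eq_square algebra_simps)
  thus ?thesis using h N by linarith
qed

lemma G4:
  assumes N: "16 \<le> N" and e: "\<eta> \<in> SS N"
  shows "N/4 \<le> japbr \<eta>" "japbr \<eta> \<le> 4*N"
proof -
  have h1: "N/4 \<le> \<bar>\<eta>$1\<bar>" "\<bar>\<eta>$1\<bar> \<le> N" "\<bar>\<eta>$2\<bar> \<le> 1"
    using e dd_small[OF N] dd_pos[of N] N
    by (auto simp: SS_def B1_def B2_def mem_bx aa_def bb_def)
  have "(N/4)\<^sup>2 \<le> (\<eta>$1)\<^sup>2" using h1 N by (intro sq_bnd2) auto
  moreover have "(\<eta>$1)\<^sup>2 \<le> N\<^sup>2" "(\<eta>$2)\<^sup>2 \<le> 1\<^sup>2" using h1 by (intro sq_bnd; simp)+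
  moreover have "1 + N\<^sup>2 + 1 \<le> (4*N)\<^sup>2" using sqN[OF N] by simp
  moreover have "0 \<le> (\<eta>$2)\<^sup>2" "(1::real)\<^sup>2 = 1" by simp_all
  ultimately have s1: "(N/4)\<^sup>2 \<le> 1 + (\<eta>$1)\<^sup>2 + (\<eta>$2)\<^sup>2"
     and s2: "1 + (\<eta>$1)\<^sup>2 + (\<eta>$2)\<^sup>2 \<le> (4*N)\<^sup>2" by linarith+
  show "N/4 \<le> japbr \<eta>" "japbr \<eta> \<le> 4*N" using japbr_bnd[OF _ _ s1 s2] N by auto
qed

lemma G5:
  assumes N: "16 \<le> N" and x: "\<xi> \<in> XI N"
  shows "N \<le> japbr \<xi>" "japbr \<xi> \<le> 2*N" "N/2 \<le> (norm \<xi>)\<^sup>2 / japbr \<xi>"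
proof -
  have h1: "N \<le> \<bar>\<xi>$1\<bar>" "\<bar>\<xi>$1\<bar> \<le> N+1" "\<bar>\<xi>$2\<bar> \<le> 1"
    using x dd_small[OF N] dd_pos[of N] N
    by (auto simp: XI_def mem_bx)
  have a: "N\<^sup>2 \<le> (\<xi>$1)\<^sup>2" using h1 N by (intro sq_bnd2) auto
  moreover have "(\<xi>$1)\<^sup>2 \<le> (N+1)\<^sup>2" "(\<xi>$2)\<^sup>2 \<le> 1\<^sup>2" using h1 by (intro sq_bnd; simp)+
  moreover have "1 + (N+1)\<^sup>2 + 1 \<le> (2*N)\<^sup>2" using sqN[OF N] by simp
  moreover have "0 \<le> (\<xi>$2)\<^sup>2" "(1::real)\<^sup>2 = 1" by simp_all
  ultimately have s1: "N\<^sup>2 \<le> 1 + (\<xi>$1)\<^sup>2 + (\<xi>$2)\<^sup>2"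
     and s2: "1 + (\<xi>$1)\<^sup>2 + (\<xi>$2)\<^sup>2 \<le> (2*N)\<^sup>2" by linarith+
  show j1: "N \<le> japbr \<xi>" and j2: "japbr \<xi> \<le> 2*N" using japbr_bnd[OF _ _ s1 s2] N by auto
  have "N\<^sup>2 \<le> (norm \<xi>)\<^sup>2" unfolding norm2 using a zero_le_power2[of "\<xi>$2"] by linarith
  have jp: "0 < japbr \<xi>" using japbr_ge1[of \<xi>] by simp
  have "N/2 = N\<^sup>2 / (2*N)" using N by (simp add: power2_eq_square)
  also have "\<dots> \<le> (norm \<xi>)\<^sup>2 / (2*N)" using \<open>N\<^sup>2 \<le> (norm \<xi>)\<^sup>2\<close> N by (simp add: divide_right_mono)
  also have "\<dots> \<le> (norm \<xi>)\<^sup>2 / japbr \<xi>" using j2 jp by (intro divide_left_mono) auto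
  finally show "N/2 \<le> (norm \<xi>)\<^sup>2 / japbr \<xi>" .
qed

lemma G6:
  assumes N: "16 \<le> N" and x: "\<xi> \<in> KK N"
  shows "japbr \<xi> \<le> 2*N" "(norm \<xi>)\<^sup>2 / japbr \<xi> \<le> 2*N"
proof -
  have h1: "\<bar>\<xi>$1\<bar> \<le> N+2" "\<bar>\<xi>$2\<bar> \<le> 1"
    using x N by (auto simp: KK_def mem_bx)
  have "(\<xi>$1)\<^sup>2 \<le> (N+2)\<^sup>2" "(\<xi>$2)\<^sup>2 \<le> 1\<^sup>2" using h1 by (intro sq_bnd; simp)+
  moreover have "1 + (N+2)\<^sup>2 + 1 \<le> (2*N)\<^sup>2" using sqN[OF N] by simp
  ultimately show j2: "japbr \<xi> \<le> 2*N" using N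
    by (intro japbr_bnd(2)[of 0]; simp; linarith)
  have jp: "1 \<le> japbr \<xi>" using japbr_ge1[of \<xi>] by simp
  have "(norm \<xi>)\<^sup>2 \<le> (japbr \<xi>)\<^sup>2" by (simp add: japbr_def)
  hence "(norm \<xi>)\<^sup>2 / japbr \<xi> \<le> (japbr \<xi>)\<^sup>2 / japbr \<xi>" using jp by (intro divide_right_mono) auto
  also have "\<dots> = japbr \<xi>" using jp by (simp add: power2_eq_square)
  finally show "(norm \<xi>)\<^sup>2 / japbr \<xi> \<le> 2*N" using j2 by simp
qed

lemma meas_B1: "16 \<le> N \<Longrightarrow> measure lborel (B1 N) = dd N / 2"
  unfolding B1_def using dd_pos[of N] by (subst measure_bx) auto
lemma meas_B2: "16 \<le> N \<Longrightarrow> measure lborel (B2 N) = dd N / 2"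
  unfolding B2_def using dd_pos[of N] by (subst measure_bx) auto
lemma meas_QQ: "16 \<le> N \<Longrightarrow> measure lborel (QQ N) = dd N / 8"
  unfolding QQ_def using dd_pos[of N] by (subst measure_bx) auto
lemma meas_XI: "16 \<le> N \<Longrightarrow> measure lborel (XI N) = dd N / 8"
  unfolding XI_def using dd_pos[of N] by (subst measure_bx) auto
lemma meas_SS: "16 \<le> N \<Longrightarrow> measure lborel (SS N) \<le> dd N"
proof -
  assume N: "16 \<le> N"
  have "measure lborel (SS N) \<le> measure lborel (B1 N) + measure lborel (B2 N)"
    unfolding SS_def by (intro measure_Un_le) (auto simp: B1_def B2_def)
  thus ?thesis using meas_B1[OF N] meas_B2[OF N] by simp
qed
lemma fin_SS: "emeasure lborel (SS N) < \<infinity>"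
proof -
  have "emeasure lborel (SS N) \<le> emeasure lborel (B1 N) + emeasure lborel (B2 N)"
    unfolding SS_def by (intro emeasure_subadditive) (auto simp: B1_def B2_def)
  also have "\<dots> < \<infinity>" unfolding B1_def B2_def using bx_fin by (simp add: ennreal_add_less_top)
  finally show ?thesis .
qed
lemma fin_QQ: "emeasure lborel (QQ N) < \<infinity>" unfolding QQ_def by (rule bx_fin)
lemma fin_XI: "emeasure lborel (XI N) < \<infinity>" unfolding XI_def by (rule bx_fin)
lemma fin_KK: "emeasure lborel (KK N) < \<infinity>" unfolding KK_def by (rule bx_fin)
lemma QQ_meas[measurable]: "QQ N \<in> sets lborel" by (simp add: QQ_def)
lemma XI_meas[measurable]: "XI N \<in> sets lborel" by (simp add: XI_def)
lemma KK_meas[measurable]: "KK N \<in> sets lborel" by (simp add: KK_def)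
lemma B1_meas[measurable]: "B1 N \<in> sets lborel" by (simp add: B1_def)

lemma sets_simp[simp]: "SS N \<in> sets borel" "QQ N \<in> sets borel" "XI N \<in> sets borel" "KK N \<in> sets borel" "B1 N \<in> sets borel"
  using SS_meas QQ_meas XI_meas KK_meas B1_meas by simp_all
lemma fin_simp[simp]: "emeasure lborel (SS N) < top" "emeasure lborel (QQ N) < top" "emeasure lborel (XI N) < top"
   "emeasure lborel (KK N) < top" "emeasure lborel (B1 N) < top"
  using fin_SS fin_QQ fin_XI fin_KK bx_fin[of "aa N" "aa N + 2 * dd N" 0 "1/4"] by (simp_all add: B1_def)

lemma japbr_meas[measurable]: "japbr \<in> borel_measurable borel"
  unfolding japbr_def by measurable

lemma UU_sq: "(cmod (UU N \<eta>))\<^sup>2 = indicator (SS N) \<eta>"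
  by (simp add: UU_def indicator_def)

lemma ufacts:
  fixes k :: real
  assumes N: "16 \<le> N"
  defines "I \<equiv> LINT \<eta>|lborel. japbr \<eta> powr (2*k) * (cmod (UU N \<eta>))\<^sup>2"
  shows "in_H k (UU N)" "0 < I" "I \<le> 4 powr \<bar>2*k\<bar> * N powr (2*k) * dd N"
proof -
  have Npos: "0 < N" using N by simp
  define Mk where "Mk = 4 powr \<bar>2*k\<bar> * N powr (2*k)"
  define lo where "lo = N powr (2*k) / 4 powr \<bar>2*k\<bar>"
  have feq: "(\<lambda>\<eta>. japbr \<eta> powr (2*k) * (cmod (UU N \<eta>))\<^sup>2) = (\<lambda>\<eta>. japbr \<eta> powr (2*k) * indicator (SS N) \<eta>)"
    by (simp add: UU_sq)
  have bnd: "\<And>\<eta>. \<eta> \<in> SS N \<Longrightarrow> lo \<le> japbr \<eta> powr (2*k) \<and> japbr \<eta> powr (2*k) \<le> Mk"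
  proof -
    fix \<eta> assume e: "\<eta> \<in> SS N"
    have "N/4 \<le> japbr \<eta>" "japbr \<eta> \<le> 4*N" using G4[OF N e] by auto
    thus "lo \<le> japbr \<eta> powr (2*k) \<and> japbr \<eta> powr (2*k) \<le> Mk"
      unfolding lo_def Mk_def using powr_sandwich[OF Npos, of 4 "japbr \<eta>" "2*k"] by auto
  qed
  have int: "integrable lborel (\<lambda>\<eta>. japbr \<eta> powr (2*k) * indicator (SS N) \<eta>)"
    by (rule integrableI_bounded_set[where A="SS N" and B=Mk])
       (auto simp: fin_SS bnd indicator_def)
  show "in_H k (UU N)" unfolding in_H_def feq using int by simp
  have intM: "integrable lborel (\<lambda>\<eta>. Mk * indicator (SS N) \<eta>)"
    using fin_SS by (intro integrable_mult_right integrable_real_indicator) auto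
  have "I \<le> (LINT \<eta>|lborel. Mk * indicator (SS N) \<eta>)"
    unfolding I_def feq by (intro integral_mono int intM) (auto simp: bnd indicator_def)
  also have "\<dots> = Mk * measure lborel (SS N)" by simp
  also have "\<dots> \<le> Mk * dd N" using meas_SS[OF N] by (intro mult_left_mono) (auto simp: Mk_def)
  finally show "I \<le> 4 powr \<bar>2*k\<bar> * N powr (2*k) * dd N" unfolding Mk_def .
  have intL: "integrable lborel (\<lambda>\<eta>. lo * indicator (B1 N) \<eta>)"
    by (intro integrable_mult_right integrable_real_indicator) auto
  have "lo * (dd N / 2) = (LINT \<eta>|lborel. lo * indicator (B1 N) \<eta>)"
    using meas_B1[OF N] by simp
  also have "\<dots> \<le> I"
    unfolding I_def feq
  proof (intro integral_mono int intL)
    fix \<eta> :: "real^2"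
    show "lo * indicator (B1 N) \<eta> \<le> japbr \<eta> powr (2 * k) * indicator (SS N) \<eta>"
      using bnd[of \<eta>] by (auto simp: indicator_def SS_def)
  qed
  finally have "lo * (dd N / 2) \<le> I" .
  moreover have "0 < lo * (dd N / 2)" unfolding lo_def using dd_pos[OF Npos] Npos by simp
  ultimately show "0 < I" by simp
qed


definition GG :: "real \<Rightarrow> real \<Rightarrow> real^2 \<Rightarrow> real^2 \<Rightarrow> complex" where
  "GG N s \<xi> \<eta> = cis (- s * (norm \<eta>)\<^sup>2) * UU N \<eta> * cnj (cis (- s * (norm (\<eta> - \<xi>))\<^sup>2) * UU N (\<eta> - \<xi>))"

lemma GG_meas[measurable]: "GG N s \<xi> \<in> borel_measurable lborel"
  unfolding GG_def by measurable

lemma schr_eq: "schr_prod_hat (UU N) s \<xi> = complex_of_real (1/(2*pi)\<^sup>2) * (LINT \<eta>|lborel. GG N s \<xi> \<eta>)"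
  unfolding schr_prod_hat_def GG_def ..

lemma GG_rot: "cis (s * japbr \<xi>) * GG N s \<xi> \<eta> =
   (if \<eta> \<in> SS N \<and> \<eta> - \<xi> \<in> SS N then cis (s * (japbr \<xi> - (norm \<eta>)\<^sup>2 + (norm (\<eta> - \<xi>))\<^sup>2)) else 0)"
proof -
  have "cis (s * japbr \<xi>) * (cis (- s * (norm \<eta>)\<^sup>2) * cis (s * (norm (\<eta> - \<xi>))\<^sup>2))
       = cis (s * (japbr \<xi> - (norm \<eta>)\<^sup>2 + (norm (\<eta> - \<xi>))\<^sup>2))"
    by (simp add: cis_mult algebra_simps)
  thus ?thesis by (auto simp: GG_def UU_def cis_cnj)
qed

lemma GG_norm: "norm (GG N s \<xi> \<eta>) \<le> indicator (SS N) \<eta>"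
  by (auto simp: GG_def UU_def indicator_def norm_mult)

lemma GG_int: "integrable lborel (GG N s \<xi>)"
  by (rule integrableI_bounded_set[where A="SS N" and B=1])
     (auto simp: GG_def UU_def norm_mult)

lemma GG_zero: "16 \<le> N \<Longrightarrow> \<xi> \<notin> KK N \<Longrightarrow> GG N s \<xi> \<eta> = 0"
  using G3[of N \<eta> \<xi>] by (auto simp: GG_def UU_def)

lemma P_norm: "16 \<le> N \<Longrightarrow> norm (LINT \<eta>|lborel. GG N s \<xi> \<eta>) \<le> dd N"
proof -
  assume N: "16 \<le> N"
  have "norm (LINT \<eta>|lborel. GG N s \<xi> \<eta>) \<le> (LINT \<eta>|lborel. norm (GG N s \<xi> \<eta>))"
    by (rule integral_norm_bound)
  also have "\<dots> \<le> (LINT \<eta>|lborel. indicator (SS N) \<eta>)"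
    by (intro integral_mono' GG_norm) auto
  also have "\<dots> \<le> dd N" using meas_SS[OF N] by simp
  finally show ?thesis .
qed

lemma P_low:
  assumes N: "16 \<le> N" and xi: "\<xi> \<in> XI N" and s: "0 \<le> s" "s \<le> 1"
  shows "dd N / 16 \<le> Re (cis (s * japbr \<xi>) * (LINT \<eta>|lborel. GG N s \<xi> \<eta>))"
proof -
  define h where "h = (\<lambda>\<eta>. cis (s * japbr \<xi>) * GG N s \<xi> \<eta>)"
  have hint: "integrable lborel h" unfolding h_def by (intro integrable_mult_right GG_int)
  have eq: "cis (s * japbr \<xi>) * (LINT \<eta>|lborel. GG N s \<xi> \<eta>) = (LINT \<eta>|lborel. h \<eta>)"
    unfolding h_def by simp
  have Reh: "(1/2) * indicator (QQ N) \<eta> \<le> Re (h \<eta>)" for \<eta>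
  proof -
    have ph: "\<eta> \<in> B1 N \<and> \<eta> - \<xi> \<in> B2 N \<Longrightarrow> 1/2 \<le> Re (h \<eta>)"
    proof -
      assume b: "\<eta> \<in> B1 N \<and> \<eta> - \<xi> \<in> B2 N"
      hence c: "\<eta> \<in> SS N \<and> \<eta> - \<xi> \<in> SS N" by (auto simp: SS_def)
      have p: "\<bar>japbr \<xi> - (norm \<eta>)\<^sup>2 + (norm (\<eta> - \<xi>))\<^sup>2\<bar> \<le> 1/2" using phase[OF N] b by auto
      have "\<bar>s * (japbr \<xi> - (norm \<eta>)\<^sup>2 + (norm (\<eta> - \<xi>))\<^sup>2)\<bar> \<le> 1 * (1/2)"
        unfolding abs_mult using p s by (intro mult_mono) auto
      hence "1/2 \<le> cos (s * (japbr \<xi> - (norm \<eta>)\<^sup>2 + (norm (\<eta> - \<xi>))\<^sup>2))" by (intro cos_half) simp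
      thus ?thesis unfolding h_def GG_rot using c by simp
    qed
    show ?thesis
    proof (cases "\<eta> \<in> QQ N")
      case True
      thus ?thesis using ph G2[OF N xi True] by simp
    next
      case False
      show ?thesis
      proof (cases "\<eta> \<in> SS N \<and> \<eta> - \<xi> \<in> SS N")
        case True
        hence "1/2 \<le> Re (h \<eta>)" using ph G1[OF N xi] by auto
        thus ?thesis using False by simp
      next
        case F2: False
        have "h \<eta> = 0" unfolding h_def GG_rot by (rule if_not_P[OF F2])
        thus ?thesis using False by simp
      qed
    qed
  qed
  have "dd N / 16 = (LINT \<eta>|lborel. (1/2) * indicator (QQ N) \<eta>)"
    using meas_QQ[OF N] by simp
  also have "\<dots> \<le> (LINT \<eta>|lborel. Re (h \<eta>))"
    by (intro integral_mono Reh integrable_mult_right integrable_real_indicator) (auto intro: hint)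
  also have "\<dots> = Re (LINT \<eta>|lborel. h \<eta>)" using hint by simp
  finally show ?thesis unfolding eq .
qed

definition Kr :: real where "Kr = 1/(2*pi)\<^sup>2"
lemma Kr_pos: "0 < Kr" by (simp add: Kr_def)

lemma schr_eqK: "schr_prod_hat (UU N) s \<xi> = complex_of_real Kr * (LINT \<eta>|lborel. GG N s \<xi> \<eta>)"
  unfolding schr_eq Kr_def ..

lemma ReofR: "Re (complex_of_real r * z) = r * Re z" by simp

lemma Icc_fin[simp]: "emeasure lborel {a..b::real} < top"
  by (simp add: emeasure_lborel_Icc_eq)

definition FF :: "real \<Rightarrow> real \<Rightarrow> real \<Rightarrow> real^2 \<Rightarrow> complex" where
  "FF N t s \<xi> = cis (- (t - s) * japbr \<xi>) * complex_of_real (- (norm \<xi>)\<^sup>2 / japbr \<xi>)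
          * schr_prod_hat (UU N) s \<xi>"

lemma duh_eq: "duhamel_hat (UU N) t \<xi> = interval_lebesgue_integral lborel (ereal 0) (ereal t) (\<lambda>s. FF N t s \<xi>)"
  unfolding duhamel_hat_def FF_def ..

lemma duh_eq2: "0 \<le> T \<Longrightarrow> duhamel_hat (UU N) T \<xi> = (LINT s|lborel. indicator {0..T} s *\<^sub>R FF N T s \<xi>)"
  unfolding duh_eq by (simp add: interval_integral_Icc set_lebesgue_integral_def)

lemma FF_meas[measurable]: "(\<lambda>s. FF N t s \<xi>) \<in> borel_measurable lborel"
  unfolding FF_def schr_prod_hat_def by measurable

lemma FF_norm: "16 \<le> N \<Longrightarrow> norm (FF N t s \<xi>) \<le> (norm \<xi>)\<^sup>2 / japbr \<xi> * Kr * dd N"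
proof -
  assume N: "16 \<le> N"
  have jp: "0 < japbr \<xi>" using japbr_ge1[of \<xi>] by simp
  have "norm (FF N t s \<xi>) = (norm \<xi>)\<^sup>2 / japbr \<xi> * Kr * norm (LINT \<eta>|lborel. GG N s \<xi> \<eta>)"
    unfolding FF_def schr_eqK using jp Kr_pos by (simp add: norm_mult norm_divide norm_power)
  also have "\<dots> \<le> (norm \<xi>)\<^sup>2 / japbr \<xi> * Kr * dd N"
    using P_norm[OF N] jp Kr_pos by (intro mult_left_mono) auto
  finally show ?thesis .
qed

lemma FF_zero: "16 \<le> N \<Longrightarrow> \<xi> \<notin> KK N \<Longrightarrow> FF N t s \<xi> = 0"
proof -
  assume "16 \<le> N" "\<xi> \<notin> KK N"
  hence "GG N s \<xi> = (\<lambda>\<eta>. 0)" using GG_zero by auto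
  thus ?thesis unfolding FF_def schr_eqK by simp
qed

lemma FF_int: "16 \<le> N \<Longrightarrow> integrable lborel (\<lambda>s. indicator {0..T} s *\<^sub>R FF N t s \<xi>)"
  by (rule integrableI_bounded_set_indicator[where B="(norm \<xi>)\<^sup>2 / japbr \<xi> * Kr * dd N"])
     (auto intro!: AE_I2 simp: FF_norm simp del: times_divide_eq_left times_divide_eq_right)

lemma D_zero: "16 \<le> N \<Longrightarrow> 0 \<le> T \<Longrightarrow> \<xi> \<notin> KK N \<Longrightarrow> duhamel_hat (UU N) T \<xi> = 0"
  unfolding duh_eq2 using FF_zero by simp

lemma D_norm: "16 \<le> N \<Longrightarrow> 0 \<le> T \<Longrightarrow> norm (duhamel_hat (UU N) T \<xi>) \<le> T * ((norm \<xi>)\<^sup>2 / japbr \<xi> * Kr * dd N)"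
proof -
  assume N: "16 \<le> N" and T: "0 \<le> T"
  have "norm (duhamel_hat (UU N) T \<xi>) \<le> (LINT s|lborel. norm (indicator {0..T} s *\<^sub>R FF N T s \<xi>))"
    unfolding duh_eq2[OF T] by (rule integral_norm_bound)
  also have "\<dots> \<le> (LINT s|lborel. indicator {0..T} s * ((norm \<xi>)\<^sup>2 / japbr \<xi> * Kr * dd N))"
  proof (intro integral_mono')
    show "integrable lborel (\<lambda>s. indicator {0..T} s * ((norm \<xi>)\<^sup>2 / japbr \<xi> * Kr * dd N))"
      by (intro integrable_mult_left integrable_real_indicator) auto
    fix s :: real
    show "norm (indicator {0..T} s *\<^sub>R FF N T s \<xi>) \<le> indicator {0..T} s * ((norm \<xi>)\<^sup>2 / japbr \<xi> * Kr * dd N)"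
      using FF_norm[OF N, of T s \<xi>] by (auto simp: indicator_def)
    show "0 \<le> indicator {0..T} s * ((norm \<xi>)\<^sup>2 / japbr \<xi> * Kr * dd N)"
      using japbr_ge1[of \<xi>] Kr_pos dd_pos[of N] N by (auto simp: indicator_def)
  qed
  also have "\<dots> = T * ((norm \<xi>)\<^sup>2 / japbr \<xi> * Kr * dd N)" using T by simp
  finally show ?thesis .
qed

lemma D_low:
  assumes N: "16 \<le> N" and T: "0 \<le> T" "T \<le> 1" and xi: "\<xi> \<in> XI N"
  shows "T * (Kr / 1024) \<le> norm (duhamel_hat (UU N) T \<xi>)"
proof -
  define q where "q = (norm \<xi>)\<^sup>2 / japbr \<xi>"
  define w where "w = - cis (T * japbr \<xi>)"
  define \<beta> where "\<beta> = q * Kr * (dd N / 16)"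
  have jp: "0 < japbr \<xi>" using japbr_ge1[of \<xi>] by simp
  have q: "N/2 \<le> q" unfolding q_def using G5[OF N xi] by simp
  have wF: "w * FF N T s \<xi> = complex_of_real (q * Kr) * (cis (s * japbr \<xi>) * (LINT \<eta>|lborel. GG N s \<xi> \<eta>))" for s
  proof -
    have "w * cis (- (T - s) * japbr \<xi>) = - cis (s * japbr \<xi>)"
      unfolding w_def by (simp add: cis_mult algebra_simps)
    hence "w * FF N T s \<xi> = - cis (s * japbr \<xi>) * complex_of_real (- q) * (complex_of_real Kr * (LINT \<eta>|lborel. GG N s \<xi> \<eta>))"
      unfolding FF_def schr_eqK q_def by (simp add: mult.assoc[symmetric])
    thus ?thesis by (simp add: algebra_simps)
  qed
  have ReF: "\<beta> \<le> Re (w * FF N T s \<xi>)" if s: "0 \<le> s" "s \<le> T" for s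
  proof -
    have "Re (w * FF N T s \<xi>) = q * Kr * Re (cis (s * japbr \<xi>) * (LINT \<eta>|lborel. GG N s \<xi> \<eta>))"
      unfolding wF by (rule ReofR)
    moreover have "dd N / 16 \<le> Re (cis (s * japbr \<xi>) * (LINT \<eta>|lborel. GG N s \<xi> \<eta>))"
      using P_low[OF N xi] s T by auto
    moreover have "0 \<le> q * Kr" using q N Kr_pos by simp
    ultimately show ?thesis unfolding \<beta>_def by (metis mult_left_mono)
  qed
  have int: "integrable lborel (\<lambda>s. w * (indicator {0..T} s *\<^sub>R FF N T s \<xi>))"
    by (intro integrable_mult_right FF_int[OF N])
  have "T * \<beta> = (LINT s|lborel. indicator {0..T} s * \<beta>)" using T by simp
  also have "\<dots> \<le> (LINT s|lborel. Re (w * (indicator {0..T} s *\<^sub>R FF N T s \<xi>)))"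
  proof (intro integral_mono)
    show "integrable lborel (\<lambda>s. indicator {0..T} s * \<beta>)"
      by (intro integrable_mult_left integrable_real_indicator) auto
    show "integrable lborel (\<lambda>s. Re (w * (indicator {0..T} s *\<^sub>R FF N T s \<xi>)))"
      using int by (rule integrable_Re)
    fix s :: real
    show "indicator {0..T} s * \<beta> \<le> Re (w * (indicator {0..T} s *\<^sub>R FF N T s \<xi>))"
      using ReF[of s] by (auto simp: indicator_def)
  qed
  also have "\<dots> = Re (LINT s|lborel. w * (indicator {0..T} s *\<^sub>R FF N T s \<xi>))"
    by (rule integral_Re[OF int])
  also have "\<dots> = Re (w * duhamel_hat (UU N) T \<xi>)" unfolding duh_eq2[OF T(1)]
    by (subst integral_mult_right_zero) (rule refl)
  also have "\<dots> \<le> norm (w * duhamel_hat (UU N) T \<xi>)" by (rule complex_Re_le_cmod)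
  also have "\<dots> = norm (duhamel_hat (UU N) T \<xi>)" unfolding w_def by (simp add: norm_mult)
  finally have "T * \<beta> \<le> norm (duhamel_hat (UU N) T \<xi>)" .
  moreover have "Kr / 1024 \<le> \<beta>"
  proof -
    have "N/2 * Kr * (dd N / 16) \<le> \<beta>" unfolding \<beta>_def using q Kr_pos dd_pos[of N] N
      by (intro mult_right_mono) auto
    moreover have "N/2 * Kr * (dd N / 16) = Kr / 1024" using N by (simp add: dd_def)
    ultimately show ?thesis by linarith
  qed
  ultimately show ?thesis using T by (smt (verit) mult_left_mono)
qed


lemma Hfacts:
  fixes l T N :: real
  assumes N: "16 \<le> N" and T: "0 < T" "T \<le> 1"
  defines "H \<equiv> (\<lambda>\<xi>. japbr \<xi> powr (2*l) * (cmod (duhamel_hat (UU N) T \<xi>))\<^sup>2)"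
  shows "N powr (2*l) / 2 powr \<bar>2*l\<bar> * (T * (Kr/1024))\<^sup>2 * (dd N / 8) \<le> (LINT \<xi>|lborel. H \<xi>)"
proof -
  have Npos: "0 < N" using N by simp
  have Hmeas: "H \<in> borel_measurable lborel"
    unfolding H_def duhamel_hat_def schr_prod_hat_def interval_lebesgue_integral_def set_lebesgue_integral_def by measurable
  have Hnn: "0 \<le> H \<xi>" for \<xi> unfolding H_def by simp
  define B where "B = (2*N) powr \<bar>2*l\<bar> * (T * (2*N * Kr * dd N))\<^sup>2"
  have Hbnd: "H \<xi> \<le> B" if xi: "\<xi> \<in> KK N" for \<xi>
  proof -
    have j1: "1 \<le> japbr \<xi>" by (rule japbr_ge1)
    have "japbr \<xi> powr (2*l) \<le> japbr \<xi> powr \<bar>2*l\<bar>" using j1 by (intro powr_mono) auto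
    also have "\<dots> \<le> (2*N) powr \<bar>2*l\<bar>" using G6[OF N xi] j1 by (intro powr_mono2) auto
    finally have a: "japbr \<xi> powr (2*l) \<le> (2*N) powr \<bar>2*l\<bar>" .
    have "cmod (duhamel_hat (UU N) T \<xi>) \<le> T * ((norm \<xi>)\<^sup>2 / japbr \<xi> * Kr * dd N)"
      using D_norm[OF N] T by simp
    also have "\<dots> \<le> T * (2*N * Kr * dd N)"
      using G6[OF N xi] T Kr_pos dd_pos[of N] Npos by (intro mult_left_mono mult_right_mono) auto
    finally have "(cmod (duhamel_hat (UU N) T \<xi>))\<^sup>2 \<le> (T * (2*N * Kr * dd N))\<^sup>2"
      by (intro power_mono) auto
    thus ?thesis unfolding H_def B_def using a by (intro mult_mono) auto
  qed
  have Hzero: "H \<xi> = 0" if "\<xi> \<notin> KK N" for \<xi>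
    unfolding H_def using D_zero[OF N _ that] T by simp
  have Hint: "integrable lborel H"
    by (rule integrableI_bounded_set[where A="KK N" and B=B]) (insert Hmeas[simplified], auto simp: Hbnd Hzero Hnn)
  define L where "L = N powr (2*l) / 2 powr \<bar>2*l\<bar> * (T * (Kr/1024))\<^sup>2"
  have Hlow: "indicator (XI N) \<xi> * L \<le> H \<xi>" for \<xi>
  proof (cases "\<xi> \<in> XI N")
    case True
    have j: "N/2 \<le> japbr \<xi>" "japbr \<xi> \<le> 2*N" using G5[OF N True] Npos by auto
    have a: "N powr (2*l) / 2 powr \<bar>2*l\<bar> \<le> japbr \<xi> powr (2*l)"
      using powr_sandwich(2)[OF Npos, of 2 "japbr \<xi>" "2*l"] j by auto
    have "(T * (Kr/1024))\<^sup>2 \<le> (cmod (duhamel_hat (UU N) T \<xi>))\<^sup>2"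
      using D_low[OF N _ T(2) True] T Kr_pos by (intro power_mono) auto
    hence "N powr (2*l) / 2 powr \<bar>2*l\<bar> * (T * (Kr/1024))\<^sup>2 \<le> H \<xi>"
      unfolding H_def using a by (intro mult_mono) auto
    thus ?thesis using True unfolding L_def by simp
  next
    case False thus ?thesis using Hnn by simp
  qed
  have "L * (dd N / 8) = (LINT \<xi>|lborel. indicator (XI N) \<xi> * L)" using meas_XI[OF N] by simp
  also have "\<dots> \<le> (LINT \<xi>|lborel. H \<xi>)"
    by (intro integral_mono Hint Hlow integrable_mult_left integrable_real_indicator) auto
  finally show ?thesis unfolding L_def .
qed

lemma alg:
  fixes N k l :: real
  assumes N: "0 < N"
  shows "(N powr (l - 2*k + 1/2))\<^sup>2 * (N powr (2*k))\<^sup>2 * (dd N)\<^sup>2 = N powr (2*l) * dd N / 32"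
proof -
  have "(N powr (l - 2*k + 1/2))\<^sup>2 * (N powr (2*k))\<^sup>2 = N powr (2*(l - 2*k + 1/2)) * N powr (2*(2*k))"
    using N by (simp add: powr_power)
  also have "\<dots> = N powr (2*(l - 2*k + 1/2) + 2*(2*k))" by (rule powr_add[symmetric])
  also have "2*(l - 2*k + 1/2) + 2*(2*k) = 2*l + 1" by simp
  also have "N powr (2*l + 1) = N powr (2*l) * N" using N by (simp add: powr_add)
  finally have e: "(N powr (l - 2*k + 1/2))\<^sup>2 * (N powr (2*k))\<^sup>2 = N powr (2*l) * N" .
  show ?thesis unfolding e dd_def using N by (simp add: power2_eq_square field_simps)
qed

theorem proposition6p6:
  fixes k l T :: real
  assumes "0 < T" and "T \<le> 1"
  shows "\<exists>N0 c. N0 > 0 \<and> c > 0 \<and>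
    (\<forall>j::nat. (2::real) ^ j \<ge> N0 \<longrightarrow>
      (\<exists>uhat :: real^2 \<Rightarrow> complex. in_H k uhat \<and> sob_norm k uhat > 0 \<and>
         (SUP t\<in>{-T..T}. ereal (sob_norm l (duhamel_hat uhat t)))
           \<ge> ereal (c * ((2::real) ^ j) powr (l - 2*k + 1/2) * (sob_norm k uhat)\<^sup>2)))"
proof -
  define Q1 where "Q1 = (T * (Kr/1024))\<^sup>2 / (8 * 2 powr \<bar>2*l\<bar>)"
  define c where "c = sqrt (32 * Q1) / 4 powr \<bar>2*k\<bar>"
  have Q1pos: "0 < Q1" unfolding Q1_def using assms Kr_pos by simp
  have cpos: "0 < c" unfolding c_def using Q1pos by simp
  have c2: "c\<^sup>2 * (4 powr \<bar>2*k\<bar>)\<^sup>2 = 32 * Q1"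
    unfolding c_def using Q1pos by (simp add: power_divide)
  show ?thesis
  proof (intro exI conjI allI impI)
    show "(16::real) > 0" "c > 0" using cpos by auto
    fix j :: nat
    assume jN: "(16::real) \<le> 2 ^ j"
    define N :: real where "N = 2 ^ j"
    have N: "16 \<le> N" using jN unfolding N_def .
    have Npos: "0 < N" using N by simp
    define I where "I = LINT \<eta>|lborel. japbr \<eta> powr (2*k) * (cmod (UU N \<eta>))\<^sup>2"
    define J where "J = LINT \<xi>|lborel. japbr \<xi> powr (2*l) * (cmod (duhamel_hat (UU N) T \<xi>))\<^sup>2"
    note uf = ufacts[OF N, of k, folded I_def]
    have Jlow: "N powr (2*l) / 2 powr \<bar>2*l\<bar> * (T * (Kr/1024))\<^sup>2 * (dd N / 8) \<le> J"
      unfolding J_def using Hfacts[OF N assms] by simp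
    have skI: "sob_norm k (UU N) = sqrt I" unfolding sob_norm_def I_def ..
    have slJ: "sob_norm l (duhamel_hat (UU N) T) = sqrt J" unfolding sob_norm_def J_def ..
    have sk2: "(sob_norm k (UU N))\<^sup>2 = I" unfolding skI using uf(2) by simp
    show "in_H k (UU N)" by (rule uf(1))
    show "sob_norm k (UU N) > 0" unfolding skI using uf(2) by simp
    define A where "A = N powr (l - 2*k + 1/2)"
    define Ib where "Ib = 4 powr \<bar>2*k\<bar> * N powr (2*k) * dd N"
    have Apos: "0 < A" unfolding A_def using Npos by simp
    have key: "c * A * I \<le> sqrt J"
    proof (rule real_le_rsqrt)
      have "(c * A * I)\<^sup>2 \<le> (c * A * Ib)\<^sup>2"
        using uf cpos Apos unfolding Ib_def by (intro power_mono mult_left_mono) auto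
      also have "(c * A * Ib)\<^sup>2 = (c\<^sup>2 * (4 powr \<bar>2*k\<bar>)\<^sup>2) * (A\<^sup>2 * (N powr (2*k))\<^sup>2 * (dd N)\<^sup>2)"
        unfolding Ib_def by (simp add: power_mult_distrib)
      also have "\<dots> = 32 * Q1 * (N powr (2*l) * dd N / 32)"
        unfolding c2 A_def alg[OF Npos] ..
      also have "\<dots> = N powr (2*l) / 2 powr \<bar>2*l\<bar> * (T * (Kr/1024))\<^sup>2 * (dd N / 8)"
        unfolding Q1_def by (simp add: field_simps)
      also have "\<dots> \<le> J" by (rule Jlow)
      finally show "(c * A * I)\<^sup>2 \<le> J" .
    qed
    have "ereal (c * ((2::real) ^ j) powr (l - 2*k + 1/2) * (sob_norm k (UU N))\<^sup>2)
          \<le> ereal (sob_norm l (duhamel_hat (UU N) T))"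
      unfolding sk2 slJ using key by (simp add: A_def N_def)
    also have "\<dots> \<le> (SUP t\<in>{-T..T}. ereal (sob_norm l (duhamel_hat (UU N) t)))"
      by (rule SUP_upper) (use assms in simp)
    finally show "(SUP t\<in>{-T..T}. ereal (sob_norm l (duhamel_hat (UU (2^j)) t)))
           \<ge> ereal (c * ((2::real) ^ j) powr (l - 2*k + 1/2) * (sob_norm k (UU (2^j)))\<^sup>2)"
      unfolding N_def .
  qed
qed

end
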